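(* Let $X,A^0,\dots,A^{d-1}\in\mathcal{M}_D(\mathbb{C})$ and for $N\ge1$ let $|\psi_N(X,A)\rangle=\sum_{i_1,\dots,i_N=0}^{d-1}\mathrm{Tr}[XA^{i_1}A^{i_2}\cdots A^{i_N}]\,|i_1i_2\cdots i_N\rangle$. Then $|\psi_N(X,A)\rangle$ is translationally invariant for every $N\ge1$ if and only if $$\mathrm{Tr}\big[X[a,b]\big]=0\quad\text{for all }a,b\in\mathrm{Alg}(\{A^i\}).$$
   Context: A state $|\psi\rangle\in(\mathbb{C}^d)^{\otimes N}$ is translationally invariant if $T|\psi\rangle=|\psi\rangle$, where $T|i_1i_2\cdots i_N\rangle=|i_2\cdots i_Ni_1\rangle$ is the cyclic shift. $[a,b]=ab-ba$. $\mathrm{Alg}(\{A^i\})$ is the linear span of all finite products $A^{i_1}\cdots A^{i_k}$ with $k\ge1$. *)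

theory Defs
  imports "HOL-Analysis.Analysis"
begin

text \<open>D x D complex matrices are modelled as complex^'D^'D (D = CARD('D));
  matrix product is **, trace is the HOL-Analysis trace.
  The family A^0,...,A^(d-1) is a function A :: nat => matrix, only i < d used.\<close>

definition cscale :: "complex \<Rightarrow> complex^'n^'m \<Rightarrow> complex^'n^'m" where
  "cscale c M = (\<chi> i j. c * M$i$j)"

definition wprod :: "(nat \<Rightarrow> complex^'n^'n) \<Rightarrow> nat list \<Rightarrow> complex^'n^'n" where
  "wprod A w = foldr (\<lambda>i M. A i ** M) w (mat 1)"

definition comm :: "complex^'n^'n \<Rightarrow> complex^'n^'n \<Rightarrow> complex^'n^'n" where
  "comm a b = a ** b - b ** a"

text \<open>Alg({A^i}): linear span of all finite products of length >= 1.\<close>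
definition Alg :: "nat \<Rightarrow> (nat \<Rightarrow> complex^'n^'n) \<Rightarrow> (complex^'n^'n) set" where
  "Alg d A = {M. \<exists>ps :: (complex \<times> nat list) list.
      (\<forall>(c, w) \<in> set ps. w \<noteq> [] \<and> set w \<subseteq> {..<d}) \<and>
      M = sum_list (map (\<lambda>(c, w). cscale c (wprod A w)) ps)}"

text \<open>A state in (C^d)^{\<otimes>N} is represented by its coefficient function on basis
  words |i_1...i_N>; psi_N(X,A) has coefficient Tr[X A^(i_1)...A^(i_N)] on words of
  length N over {0..<d} and 0 elsewhere.\<close>
definition psi :: "nat \<Rightarrow> complex^'n^'n \<Rightarrow> (nat \<Rightarrow> complex^'n^'n) \<Rightarrow> nat \<Rightarrow> nat list \<Rightarrow> complex" where
  "psi d X A N = (\<lambda>w. if length w = N \<and> set w \<subseteq> {..<d} then trace (X ** wprod A w) else 0)"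

text \<open>Cyclic shift T|i_1 i_2...i_N> = |i_2...i_N i_1>, extended linearly:
  the coefficient of (T psi) at u is the coefficient of psi at the word w with rotate1 w = u.\<close>
definition cyc_shift :: "(nat list \<Rightarrow> complex) \<Rightarrow> nat list \<Rightarrow> complex" where
  "cyc_shift \<psi> = (\<lambda>u. \<psi> (if u = [] then [] else last u # butlast u))"

definition trans_inv :: "(nat list \<Rightarrow> complex) \<Rightarrow> bool" where
  "trans_inv \<psi> \<longleftrightarrow> cyc_shift \<psi> = \<psi>"

end

theory Submission
  imports Defs
begin

lemma wprod_append: "wprod A (u @ v) = wprod A u ** wprod A v"
  by (induction u) (simp_all add: wprod_def matrix_mul_assoc)

lemma cscale_mul_l: "cscale c M ** (N::complex^'n^'n) = cscale c (M ** N)"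
  by (simp add: cscale_def matrix_matrix_mult_def vec_eq_iff sum_distrib_left mult.assoc)

lemma cscale_mul_r: "(M::complex^'n^'n) ** cscale c N = cscale c (M ** N)"
  by (simp add: cscale_def matrix_matrix_mult_def vec_eq_iff sum_distrib_left mult.left_commute)

lemma trace_cscale: "trace (cscale c (M::complex^'n^'n)) = c * trace M"
  by (simp add: trace_def cscale_def sum_distrib_left)

lemma radd: "((M::complex^'n^'n) + N) ** P = M ** P + N ** P"
  by (simp add: matrix_matrix_mult_def vec_eq_iff sum.distrib distrib_right)

lemma lsub: "(M::complex^'n^'n) ** (N - P) = M ** N - M ** P"
  by (simp add: matrix_matrix_mult_def vec_eq_iff sum_subtractf right_diff_distrib)

lemma Alg_induct:
  assumes z: "(0::complex^'n^'n) \<in> S"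
    and add: "\<And>a b. a \<in> S \<Longrightarrow> b \<in> S \<Longrightarrow> a + b \<in> S"
    and sc: "\<And>c a. a \<in> S \<Longrightarrow> cscale c a \<in> S"
    and w: "\<And>w. w \<noteq> [] \<Longrightarrow> set w \<subseteq> {..<d} \<Longrightarrow> wprod A w \<in> S"
    and m: "M \<in> Alg d A"
  shows "M \<in> S"
proof -
  obtain ps :: "(complex \<times> nat list) list" where
    h: "\<forall>(c, w) \<in> set ps. w \<noteq> [] \<and> set w \<subseteq> {..<d}"
    and M: "M = sum_list (map (\<lambda>(c, w). cscale c (wprod A w)) ps)"
    using m unfolding Alg_def by blast
  have "sum_list (map (\<lambda>(c, w). cscale c (wprod A w)) ps) \<in> S" using h
  proof (induction ps)
    case Nil then show ?case using z by simp
  next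
    case (Cons p ps)
    obtain c w where p: "p = (c, w)" by force
    have "cscale c (wprod A w) \<in> S" using Cons.prems p w sc by auto
    moreover have "sum_list (map (\<lambda>(c, w). cscale c (wprod A w)) ps) \<in> S"
      using Cons by simp
    ultimately show ?case using add p by simp
  qed
  then show ?thesis using M by simp
qed

lemma comm_closure:
  fixes X :: "complex^'n^'n" and A :: "nat \<Rightarrow> complex^'n^'n"
  assumes rot: "\<And>u v. set u \<subseteq> {..<d} \<Longrightarrow> set v \<subseteq> {..<d} \<Longrightarrow>
      trace (X ** wprod A (u @ v)) = trace (X ** wprod A (v @ u))"
    and a: "a \<in> Alg d A" and b: "b \<in> Alg d A"
  shows "trace (X ** (a ** b)) = trace (X ** (b ** a))"
proof -
  define P where "P = (\<lambda>a b. trace (X ** (a ** b)) = trace (X ** (b ** a)))"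
  have closed: "{a. P a b} \<supseteq> Alg d A" if wb: "\<And>w. w \<noteq> [] \<Longrightarrow> set w \<subseteq> {..<d} \<Longrightarrow> P (wprod A w) b" for b
  proof
    fix a assume "a \<in> Alg d A"
    then show "a \<in> {a. P a b}"
    proof (rule Alg_induct[rotated 4])
      show "0 \<in> {a. P a b}" by (simp add: P_def)
      show "a1 + a2 \<in> {a. P a b}" if "a1 \<in> {a. P a b}" "a2 \<in> {a. P a b}" for a1 a2
        using that by (simp add: P_def radd matrix_add_ldistrib trace_add)
      show "cscale c a1 \<in> {a. P a b}" if "a1 \<in> {a. P a b}" for c a1
        using that by (simp add: P_def cscale_mul_l cscale_mul_r trace_cscale)
      show "wprod A w \<in> {a. P a b}" if "w \<noteq> []" "set w \<subseteq> {..<d}" for w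
        using wb that by simp
    qed
  qed
  have step1: "P a (wprod A v)" if "v \<noteq> []" "set v \<subseteq> {..<d}" "a \<in> Alg d A" for a v
  proof -
    have "{a. P a (wprod A v)} \<supseteq> Alg d A"
      by (rule closed) (use that rot in \<open>simp add: P_def wprod_append\<close>)
    then show ?thesis using that by blast
  qed
  have "{x. P x a} \<supseteq> Alg d A"
    by (rule closed) (use step1 a in \<open>auto simp: P_def\<close>)
  then have "P b a" using b by blast
  then show ?thesis by (simp add: P_def)
qed

theorem lemma3:
  fixes X :: "complex^'D^'D" and A :: "nat \<Rightarrow> complex^'D^'D" and d :: nat
  shows "(\<forall>N\<ge>1. trans_inv (psi d X A N)) \<longleftrightarrow>
         (\<forall>a\<in>Alg d A. \<forall>b\<in>Alg d A. trace (X ** comm a b) = 0)"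
proof
  assume L: "\<forall>N\<ge>1. trans_inv (psi d X A N)"
  have one: "trace (X ** wprod A (j # v)) = trace (X ** wprod A (v @ [j]))"
    if "j < d" "set v \<subseteq> {..<d}" for j v
  proof -
    let ?u = "v @ [j]"
    have "cyc_shift (psi d X A (length ?u)) ?u = psi d X A (length ?u) ?u"
      using L unfolding trans_inv_def by (metis length_append_singleton le_add2 Suc_eq_plus1 add.commute)
    then show ?thesis using that by (simp add: cyc_shift_def psi_def)
  qed
  have rot: "trace (X ** wprod A (u @ v)) = trace (X ** wprod A (v @ u))"
    if "set u \<subseteq> {..<d}" "set v \<subseteq> {..<d}" for u v
    using that
  proof (induction u arbitrary: v)
    case Nil then show ?case by simp
  next
    case (Cons a u)
    have "trace (X ** wprod A ((a # u) @ v)) = trace (X ** wprod A (u @ v @ [a]))"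
      using one[of a "u @ v"] Cons.prems by simp
    also have "\<dots> = trace (X ** wprod A ((v @ [a]) @ u))"
      using Cons.IH[of "v @ [a]"] Cons.prems by simp
    finally show ?case by simp
  qed
  show "\<forall>a\<in>Alg d A. \<forall>b\<in>Alg d A. trace (X ** comm a b) = 0"
  proof (intro ballI)
    fix a b assume "a \<in> Alg d A" "b \<in> Alg d A"
    then have "trace (X ** (a ** b)) = trace (X ** (b ** a))"
      using comm_closure[OF rot] by blast
    then show "trace (X ** comm a b) = 0"
      by (simp add: comm_def lsub trace_sub)
  qed
next
  assume R: "\<forall>a\<in>Alg d A. \<forall>b\<in>Alg d A. trace (X ** comm a b) = 0"
  have wAlg: "wprod A w \<in> Alg d A" if "w \<noteq> []" "set w \<subseteq> {..<d}" for w
  proof -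
    have "cscale 1 M = M" for M :: "complex^'D^'D" by (simp add: cscale_def vec_eq_iff)
    then show ?thesis unfolding Alg_def using that
      by (intro CollectI exI[of _ "[(1, w)]"]) simp
  qed
  have one: "trace (X ** wprod A (j # v)) = trace (X ** wprod A (v @ [j]))"
    if "j < d" "set v \<subseteq> {..<d}" for j v
  proof (cases "v = []")
    case True then show ?thesis by simp
  next
    case False
    have "trace (X ** comm (wprod A [j]) (wprod A v)) = 0"
      using R wAlg[of "[j]"] wAlg[OF False that(2)] that by simp
    then show ?thesis
      by (simp add: comm_def lsub trace_sub wprod_append[symmetric])
  qed
  show "\<forall>N\<ge>1. trans_inv (psi d X A N)"
  proof (intro allI impI)
    fix N :: nat assume N: "N \<ge> 1"
    show "trans_inv (psi d X A N)" unfolding trans_inv_def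
    proof
      fix u
      show "cyc_shift (psi d X A N) u = psi d X A N u"
      proof (cases "u = []")
        case True then show ?thesis by (simp add: cyc_shift_def)
      next
        case False
        then have u: "u = butlast u @ [last u]" by simp
        have st: "set (last u # butlast u) = set u" "length (last u # butlast u) = length u"
          using u False by (metis list.set(2) set_append Un_commute empty_set insert_is_Un, simp)
        show ?thesis
        proof (cases "length u = N \<and> set u \<subseteq> {..<d}")
          case True
          then have "last u < d" "set (butlast u) \<subseteq> {..<d}" using st by auto
          from one[OF this] have "trace (X ** wprod A (last u # butlast u)) = trace (X ** wprod A u)"
            using u by metis
          then show ?thesis using True st by (simp add: cyc_shift_def psi_def False)
        next
          case F: False
          then show ?thesis using st by (auto simp add: cyc_shift_def psi_def False)
        qed
      qed
    qed
  qed
qed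

end
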